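(* Let $\beta>0$, $\gamma\ge0$, $\mu_c,\mu_d,\varphi\in\mathbb R$, $\sigma,\sigma_c,\sigma_d>0$ and $-1<\rho<1$. Let $\{(\xi_t,\epsilon_t,\eta_t)\}_{t\ge1}$ be iid standard normal in $\mathbb R^3$, let $X_{t+1}=\rho X_t+\sigma\eta_{t+1}$ with $X_0\sim N(0,\sigma^2/(1-\rho^2))$ independent of the shocks, and $$\Phi_{t+1}=\beta\exp\{(\mu_d+\varphi X_t+\sigma_d\xi_{t+1})-\gamma(\mu_c+X_t+\sigma_c\epsilon_{t+1})\}.$$ Then for every $p\ge1$ the limit $\mathcal L_\Phi^p$ exists and $$\mathcal L_\Phi^p=\ln\beta+\mu_d-\gamma\mu_c+\frac{\sigma^2}{2}\frac{(\varphi-\gamma)^2}{(1-\rho)^2}+\frac{\sigma_d^2+(\gamma\sigma_c)^2}{2}.$$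
   Context: $\mathcal L_\Phi^p:=\lim_{n\to\infty}\frac{1}{np}\ln\int\big(\mathbb E_x\prod_{t=1}^n\Phi_t\big)^p\pi(dx)$, where $\mathbb E_x$ denotes expectation conditional on $X_0=x$ and $\pi=N(0,\sigma^2/(1-\rho^2))$ is the stationary law of $\{X_t\}$. *)

theory Defs
  imports "HOL-Probability.Probability"
begin

definition N01 :: "real measure" where
  "N01 = density lborel std_normal_density"

text \<open>Joint law of n iid shock triples (xi_{t+1}, eps_{t+1}, eta_{t+1}), t < n,
  each standard normal in R^3; w t = (xi_{t+1}, eps_{t+1}, eta_{t+1}).\<close>
definition shockM :: "nat \<Rightarrow> (nat \<Rightarrow> real \<times> real \<times> real) measure" where
  "shockM n = PiM {..<n} (\<lambda>_. N01 \<Otimes>\<^sub>M (N01 \<Otimes>\<^sub>M N01))"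

fun Xpath :: "real \<Rightarrow> real \<Rightarrow> real \<Rightarrow> (nat \<Rightarrow> real \<times> real \<times> real) \<Rightarrow> nat \<Rightarrow> real" where
  "Xpath \<rho> \<sigma> x w 0 = x"
| "Xpath \<rho> \<sigma> x w (Suc t) = \<rho> * Xpath \<rho> \<sigma> x w t + \<sigma> * snd (snd (w t))"

end

theory Submission imports Defs begin


lemma pair_int_mult:
  fixes f :: "'a \<Rightarrow> real" and g :: "'b \<Rightarrow> real"
  assumes "prob_space M1" "prob_space M2" "integrable M1 f" "integrable M2 g"
  shows "integrable (M1 \<Otimes>\<^sub>M M2) (\<lambda>z. f (fst z) * g (snd z))"
    and "(\<integral>z. f (fst z) * g (snd z) \<partial>(M1 \<Otimes>\<^sub>M M2)) = integral\<^sup>L M1 f * integral\<^sup>L M2 g"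
proof -
  interpret pair_prob_space M1 M2
    by (simp add: pair_prob_space_def pair_sigma_finite_def assms prob_space_imp_sigma_finite)
  have [measurable]: "f \<in> borel_measurable M1" "g \<in> borel_measurable M2" using assms by auto
  show int: "integrable (M1 \<Otimes>\<^sub>M M2) (\<lambda>z. f (fst z) * g (snd z))"
  proof (rule Fubini_integrable)
    show "(\<lambda>z. f (fst z) * g (snd z)) \<in> borel_measurable (M1 \<Otimes>\<^sub>M M2)" by measurable
    have "integrable M1 (\<lambda>x. \<bar>f x\<bar> * (\<integral>y. \<bar>g y\<bar> \<partial>M2))"
      using assms(3) by (intro integrable_mult_left) auto
    then show "integrable M1 (\<lambda>x. \<integral>y. norm (f (fst (x, y)) * g (snd (x, y))) \<partial>M2)"
      by (simp add: abs_mult)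
    show "AE x in M1. integrable M2 (\<lambda>y. f (fst (x, y)) * g (snd (x, y)))"
      using assms(4) by simp
  qed
  show "(\<integral>z. f (fst z) * g (snd z) \<partial>(M1 \<Otimes>\<^sub>M M2)) = integral\<^sup>L M1 f * integral\<^sup>L M2 g"
    using integral_fst'[OF int, symmetric] by simp
qed

lemma gauss_mgf:
  assumes "s > 0"
  shows "integrable (density lborel (normal_density 0 s)) (\<lambda>x. exp (a*x))"
    and "(\<integral>x. exp (a*x) \<partial>density lborel (normal_density 0 s)) = exp ((a\<^sup>2 * s\<^sup>2) / 2)"
proof -
  have eq: "normal_density 0 s x * exp(a*x) = exp((a\<^sup>2 * s\<^sup>2) / 2) * normal_density (a * s\<^sup>2) s x" for x
  proof -
    have "-(x - 0)\<^sup>2/ (2 * s\<^sup>2) + a*x = (a\<^sup>2 * s\<^sup>2) / 2 + (-(x - a * s\<^sup>2)\<^sup>2/ (2 * s\<^sup>2))"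
      using assms by (simp add: field_simps power2_eq_square)
    then show ?thesis unfolding normal_density_def
      by (simp add: exp_add[symmetric] mult_ac)
  qed
  have i: "integrable lborel (\<lambda>x. normal_density 0 s x * exp(a*x))"
    unfolding eq using integrable_normal_density[OF assms, of "a * s\<^sup>2"] by simp
  show "integrable (density lborel (normal_density 0 s)) (\<lambda>x. exp (a*x))"
    using i by (subst integrable_real_density) auto
  show "(\<integral>x. exp (a*x) \<partial>density lborel (normal_density 0 s)) = exp ((a\<^sup>2 * s\<^sup>2) / 2)"
    by (subst integral_real_density) (auto simp: eq integral_normal_density[OF assms])
qed

lemma prob_N01: "prob_space N01"
  unfolding N01_def by (rule prob_space_normal_density) simp

lemma prob_N3: "prob_space (N01 \<Otimes>\<^sub>M (N01 \<Otimes>\<^sub>M N01))"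
proof -
  interpret A: pair_prob_space N01 N01
    by (simp add: pair_prob_space_def pair_sigma_finite_def prob_N01 prob_space_imp_sigma_finite)
  interpret B: pair_prob_space N01 "N01 \<Otimes>\<^sub>M N01"
    by (simp add: pair_prob_space_def pair_sigma_finite_def prob_N01 prob_space_imp_sigma_finite A.P.prob_space_axioms)
  show ?thesis by (rule B.P.prob_space_axioms)
qed

lemma N3_int:
  fixes a b c k :: real
  shows "integrable (N01 \<Otimes>\<^sub>M (N01 \<Otimes>\<^sub>M N01)) (\<lambda>z. k * exp (a * fst z + b * fst (snd z) + c * snd (snd z)))"
    and "(\<integral>z. k * exp (a * fst z + b * fst (snd z) + c * snd (snd z)) \<partial>(N01 \<Otimes>\<^sub>M (N01 \<Otimes>\<^sub>M N01)))
         = k * exp (a\<^sup>2/2 + b\<^sup>2/2 + c\<^sup>2/2)"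
proof -
  have g: "integrable N01 (\<lambda>x. exp (a*x))" "integral\<^sup>L N01 (\<lambda>x. exp (a*x)) = exp (a\<^sup>2/2)" for a
    using gauss_mgf[OF zero_less_one, of a] unfolding N01_def by auto
  have pN: "prob_space (N01 \<Otimes>\<^sub>M N01)"
  proof -
    interpret A: pair_prob_space N01 N01
      by (simp add: pair_prob_space_def pair_sigma_finite_def prob_N01 prob_space_imp_sigma_finite)
    show ?thesis by (rule A.P.prob_space_axioms)
  qed
  note i2 = pair_int_mult[OF prob_N01 prob_N01 g(1)[of b] g(1)[of c]]
  note i3 = pair_int_mult[OF prob_N01 pN g(1)[of a] i2(1)]
  have e: "exp (a * fst z + b * fst (snd z) + c * snd (snd z)) = exp (a * fst z) * (exp (b * fst (snd z)) * exp (c * snd (snd z)))" for z :: "real \<times> real \<times> real"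
    by (simp add: exp_add)
  show "integrable (N01 \<Otimes>\<^sub>M (N01 \<Otimes>\<^sub>M N01)) (\<lambda>z. k * exp (a * fst z + b * fst (snd z) + c * snd (snd z)))"
    unfolding e using i3(1) by (intro integrable_mult_right) 
  show "(\<integral>z. k * exp (a * fst z + b * fst (snd z) + c * snd (snd z)) \<partial>(N01 \<Otimes>\<^sub>M (N01 \<Otimes>\<^sub>M N01)))
         = k * exp (a\<^sup>2/2 + b\<^sup>2/2 + c\<^sup>2/2)"
    unfolding e using i3(2) i2(2) g(2) by (simp add: exp_add)
qed



definition Gs :: "real \<Rightarrow> nat \<Rightarrow> real" where "Gs r m = (\<Sum>k<m. r^k)"

lemma Gs_Suc: "Gs r (Suc m) = Gs r m + r^m" by (simp add: Gs_def)
lemma Gs_0[simp]: "Gs r 0 = 0" by (simp add: Gs_def)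

lemma Xclosed: "Xpath \<rho> \<sigma> x w t = \<rho>^t * x + \<sigma> * (\<Sum>s<t. \<rho>^(t - Suc s) * snd (snd (w s)))"
proof (induction t)
  case 0 then show ?case by simp
next
  case (Suc t)
  have "(\<Sum>s<Suc t. \<rho>^(Suc t - Suc s) * snd (snd (w s))) = \<rho> * (\<Sum>s<t. \<rho>^(t - Suc s) * snd (snd (w s))) + snd (snd (w t))"
    by (simp add: sum_distrib_left mult.assoc[symmetric] Suc_diff_Suc power_Suc[symmetric] del: power_Suc)
  then show ?case using Suc by (simp add: algebra_simps)
qed

lemma Xsum: "(\<Sum>t<n. Xpath \<rho> \<sigma> x w t) = Gs \<rho> n * x + \<sigma> * (\<Sum>s<n. Gs \<rho> (n - Suc s) * snd (snd (w s)))"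
proof (induction n)
  case 0 then show ?case by simp
next
  case (Suc n)
  have "(\<Sum>s<Suc n. Gs \<rho> (Suc n - Suc s) * snd (snd (w s)))
     = (\<Sum>s<n. Gs \<rho> (n - Suc s) * snd (snd (w s))) + (\<Sum>s<n. \<rho>^(n - Suc s) * snd (snd (w s)))"
  proof -
    have "(\<Sum>s<n. Gs \<rho> (Suc n - Suc s) * snd (snd (w s))) = (\<Sum>s<n. Gs \<rho> (n - Suc s) * snd (snd (w s)) + \<rho>^(n - Suc s) * snd (snd (w s)))"
    proof (rule sum.cong)
      fix s assume "s \<in> {..<n}"
      then have "Suc n - Suc s = Suc (n - Suc s)" by auto
      then show "Gs \<rho> (Suc n - Suc s) * snd (snd (w s)) = Gs \<rho> (n - Suc s) * snd (snd (w s)) + \<rho>^(n - Suc s) * snd (snd (w s))"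
        by (simp add: Gs_Suc algebra_simps)
    qed simp
    then show ?thesis by (simp add: sum.distrib)
  qed
  then show ?case using Suc by (simp add: Xclosed Gs_Suc algebra_simps)
qed

lemma factor:
  fixes \<beta> \<gamma> \<mu>c \<mu>d \<phi> \<sigma> \<sigma>c \<sigma>d \<rho> :: real
  shows "(\<Prod>t<n. \<beta> * exp ((\<mu>d + \<phi> * Xpath \<rho> \<sigma> x w t + \<sigma>d * fst (w t))
                                  - \<gamma> * (\<mu>c + Xpath \<rho> \<sigma> x w t + \<sigma>c * fst (snd (w t)))))
    = exp ((\<phi> - \<gamma>) * Gs \<rho> n * x) *
      (\<Prod>s<n. (\<beta> * exp (\<mu>d - \<gamma> * \<mu>c)) * exp (\<sigma>d * fst (w s) + (- (\<gamma> * \<sigma>c)) * fst (snd (w s))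
            + ((\<phi> - \<gamma>) * \<sigma> * Gs \<rho> (n - Suc s)) * snd (snd (w s))))"
proof -
  let ?k = "\<beta> * exp (\<mu>d - \<gamma> * \<mu>c)"
  let ?A = "\<lambda>t. \<sigma>d * fst (w t) + (- (\<gamma> * \<sigma>c)) * fst (snd (w t))"
  have "(\<Prod>t<n. \<beta> * exp ((\<mu>d + \<phi> * Xpath \<rho> \<sigma> x w t + \<sigma>d * fst (w t))
                                  - \<gamma> * (\<mu>c + Xpath \<rho> \<sigma> x w t + \<sigma>c * fst (snd (w t)))))
      = (\<Prod>t<n. (?k * exp (?A t)) * exp ((\<phi> - \<gamma>) * Xpath \<rho> \<sigma> x w t))"
    by (rule prod.cong) (simp_all add: exp_add[symmetric] algebra_simps)
  also have "\<dots> = (\<Prod>t<n. ?k * exp (?A t)) * exp ((\<phi> - \<gamma>) * (\<Sum>t<n. Xpath \<rho> \<sigma> x w t))"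
    by (simp add: prod.distrib exp_sum sum_distrib_left)
  also have "\<dots> = (\<Prod>t<n. ?k * exp (?A t)) * (exp ((\<phi> - \<gamma>) * Gs \<rho> n * x) *
        exp (\<Sum>s<n. ((\<phi> - \<gamma>) * \<sigma> * Gs \<rho> (n - Suc s)) * snd (snd (w s))))"
    by (simp add: Xsum exp_add[symmetric] sum_distrib_left algebra_simps)
  also have "\<dots> = exp ((\<phi> - \<gamma>) * Gs \<rho> n * x) *
      (\<Prod>s<n. ?k * exp (?A s + ((\<phi> - \<gamma>) * \<sigma> * Gs \<rho> (n - Suc s)) * snd (snd (w s))))"
    by (simp add: exp_sum exp_add prod.distrib mult_ac)
  finally show ?thesis by simp
qed



lemma inner:
  fixes \<beta> \<gamma> \<mu>c \<mu>d \<phi> \<sigma> \<sigma>c \<sigma>d \<rho> :: real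
  shows "(\<integral>w. (\<Prod>t<n. \<beta> * exp ((\<mu>d + \<phi> * Xpath \<rho> \<sigma> x w t + \<sigma>d * fst (w t))
                                  - \<gamma> * (\<mu>c + Xpath \<rho> \<sigma> x w t + \<sigma>c * fst (snd (w t)))))
               \<partial>shockM n)
    = exp ((\<phi> - \<gamma>) * Gs \<rho> n * x) *
      (\<Prod>s<n. (\<beta> * exp (\<mu>d - \<gamma> * \<mu>c)) * exp (\<sigma>d\<^sup>2/2 + (- (\<gamma> * \<sigma>c))\<^sup>2/2
            + ((\<phi> - \<gamma>) * \<sigma> * Gs \<rho> (n - Suc s))\<^sup>2/2))"
proof -
  define F where "F = (\<lambda>s (z::real\<times>real\<times>real). (\<beta> * exp (\<mu>d - \<gamma> * \<mu>c)) * exp (\<sigma>d * fst z + (- (\<gamma> * \<sigma>c)) * fst (snd z)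
            + ((\<phi> - \<gamma>) * \<sigma> * Gs \<rho> (n - Suc s)) * snd (snd z)))"
  interpret product_sigma_finite "\<lambda>_::nat. N01 \<Otimes>\<^sub>M (N01 \<Otimes>\<^sub>M N01)"
    by (simp add: product_sigma_finite_def prob_space_imp_sigma_finite prob_N3)
  have eq: "(\<Prod>t<n. \<beta> * exp ((\<mu>d + \<phi> * Xpath \<rho> \<sigma> x w t + \<sigma>d * fst (w t))
                                  - \<gamma> * (\<mu>c + Xpath \<rho> \<sigma> x w t + \<sigma>c * fst (snd (w t)))))
     = exp ((\<phi> - \<gamma>) * Gs \<rho> n * x) * (\<Prod>s\<in>{..<n}. F s (w s))" for w
    unfolding factor F_def by simp
  have p: "(\<integral>w. (\<Prod>s\<in>{..<n}. F s (w s)) \<partial>shockM n) = (\<Prod>s\<in>{..<n}. integral\<^sup>L (N01 \<Otimes>\<^sub>M (N01 \<Otimes>\<^sub>M N01)) (F s))"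
    unfolding shockM_def by (rule product_integral_prod, simp, unfold F_def, rule N3_int(1))
  have Fi: "integral\<^sup>L (N01 \<Otimes>\<^sub>M (N01 \<Otimes>\<^sub>M N01)) (F s) = (\<beta> * exp (\<mu>d - \<gamma> * \<mu>c)) * exp (\<sigma>d\<^sup>2/2 + (- (\<gamma> * \<sigma>c))\<^sup>2/2
            + ((\<phi> - \<gamma>) * \<sigma> * Gs \<rho> (n - Suc s))\<^sup>2/2)" for s
    unfolding F_def by (rule N3_int(2))
  show ?thesis
    unfolding eq integral_mult_right_zero p Fi ..
qed

lemma S_lim:
  fixes \<rho> :: real
  assumes "-1 < \<rho>" "\<rho> < 1"
  shows "(\<lambda>n. (\<Sum>k<n. (Gs \<rho> k)\<^sup>2) / real n) \<longlonglongrightarrow> 1 / (1 - \<rho>)\<^sup>2"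
proof -
  have r1: "\<rho> \<noteq> 1" using assms by auto
  have nr1: "norm \<rho> < 1" using assms by auto
  have nr2: "norm (\<rho>\<^sup>2) < 1" using abs_square_less_1[of \<rho>] assms by simp
  note nr = nr1 nr2
  have G1: "(\<lambda>n. Gs \<rho> n) \<longlonglongrightarrow> 1 / (1 - \<rho>)"
    using geometric_sums[OF nr(1)] unfolding sums_def Gs_def by simp
  have G2: "(\<lambda>n. Gs (\<rho>\<^sup>2) n) \<longlonglongrightarrow> 1 / (1 - \<rho>\<^sup>2)"
    using geometric_sums[OF nr(2)] unfolding sums_def Gs_def by simp
  have Gk: "(Gs \<rho> k)\<^sup>2 = (1 - 2 * \<rho>^k + (\<rho>\<^sup>2)^k) / (1 - \<rho>)\<^sup>2" for k
  proof -
    have g: "Gs \<rho> k = (1 - \<rho>^k) / (1 - \<rho>)" using r1 unfolding Gs_def sum_gp_strict by simp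
    have e: "(\<rho>\<^sup>2)^k = (\<rho>^k)\<^sup>2" by (metis power_mult mult.commute)
    have f: "(1 - \<rho>^k)\<^sup>2 = 1 - 2 * \<rho>^k + (\<rho>^k)\<^sup>2" by (simp add: power2_diff)
    show ?thesis unfolding g e power_divide f ..
  qed
  have Ssum: "(\<Sum>k<n. (Gs \<rho> k)\<^sup>2) = (real n - 2 * Gs \<rho> n + Gs (\<rho>\<^sup>2) n) / (1 - \<rho>)\<^sup>2" for n
  proof -
    have "(\<Sum>k<n. (Gs \<rho> k)\<^sup>2) = (\<Sum>k<n. 1 - 2 * \<rho>^k + (\<rho>\<^sup>2)^k) / (1 - \<rho>)\<^sup>2"
      by (simp add: Gk sum_divide_distrib)
    also have "(\<Sum>k<n. 1 - 2 * \<rho>^k + (\<rho>\<^sup>2)^k) = real n - 2 * Gs \<rho> n + Gs (\<rho>\<^sup>2) n"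
      by (simp add: Gs_def sum.distrib sum_subtractf sum_distrib_left)
    finally show ?thesis .
  qed
  have ev: "\<forall>\<^sub>F n in sequentially. (\<Sum>k<n. (Gs \<rho> k)\<^sup>2) / real n
      = (1 - 2 * (Gs \<rho> n * (1 / real n)) + Gs (\<rho>\<^sup>2) n * (1 / real n)) / (1 - \<rho>)\<^sup>2"
    using eventually_ge_at_top[of "1::nat"]
    by eventually_elim (simp add: Ssum field_simps)
  have "(\<lambda>n. (1 - 2 * (Gs \<rho> n * (1 / real n)) + Gs (\<rho>\<^sup>2) n * (1 / real n)) / (1 - \<rho>)\<^sup>2)
        \<longlonglongrightarrow> (1 - 2 * (1 / (1 - \<rho>) * 0) + 1 / (1 - \<rho>\<^sup>2) * 0) / (1 - \<rho>)\<^sup>2"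
    by (intro tendsto_intros G1 G2) (use r1 in auto)
  then show ?thesis using tendsto_cong[OF ev] by simp
qed

lemma A_lim:
  fixes \<rho> :: real
  assumes "-1 < \<rho>" "\<rho> < 1"
  shows "(\<lambda>n. (Gs \<rho> n)\<^sup>2 * (1 / real n)) \<longlonglongrightarrow> 0"
proof -
  have nr: "norm \<rho> < 1" using assms by auto
  have G1: "(\<lambda>n. Gs \<rho> n) \<longlonglongrightarrow> 1 / (1 - \<rho>)"
    using geometric_sums[OF nr(1)] unfolding sums_def Gs_def by simp
  have "(\<lambda>n. (Gs \<rho> n)\<^sup>2 * (1 / real n)) \<longlonglongrightarrow> (1 / (1 - \<rho>))\<^sup>2 * 0"
    by (intro tendsto_intros G1)
  then show ?thesis by simp
qed



theorem mainTheorem14: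
  fixes \<beta> \<gamma> \<mu>c \<mu>d \<phi> \<sigma> \<sigma>c \<sigma>d \<rho> p :: real
  assumes "\<beta> > 0" "\<gamma> \<ge> 0" "\<sigma> > 0" "\<sigma>c > 0" "\<sigma>d > 0" "-1 < \<rho>" "\<rho> < 1" "p \<ge> 1"
  shows "(\<lambda>n. 1 / (real n * p) * ln (\<integral>x.
            (\<integral>w. (\<Prod>t<n. \<beta> * exp ((\<mu>d + \<phi> * Xpath \<rho> \<sigma> x w t + \<sigma>d * fst (w t))
                                  - \<gamma> * (\<mu>c + Xpath \<rho> \<sigma> x w t + \<sigma>c * fst (snd (w t)))))
               \<partial>shockM n) powr p
          \<partial>density lborel (normal_density 0 (sqrt (\<sigma>\<^sup>2 / (1 - \<rho>\<^sup>2))))))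
         \<longlonglongrightarrow> ln \<beta> + \<mu>d - \<gamma> * \<mu>c + \<sigma>\<^sup>2 / 2 * ((\<phi> - \<gamma>)\<^sup>2 / (1 - \<rho>)\<^sup>2)
             + (\<sigma>d\<^sup>2 + (\<gamma> * \<sigma>c)\<^sup>2) / 2"
proof -
  define q where "q = \<phi> - \<gamma>"
  define k where "k = \<beta> * exp (\<mu>d - \<gamma> * \<mu>c)"
  define K where "K n = (\<Prod>s<n. k * exp (\<sigma>d\<^sup>2/2 + (- (\<gamma> * \<sigma>c))\<^sup>2/2
            + ((\<phi> - \<gamma>) * \<sigma> * Gs \<rho> (n - Suc s))\<^sup>2/2))" for n
  define v where "v = \<sigma>\<^sup>2 / (1 - \<rho>\<^sup>2)"
  define L0 where "L0 = ln \<beta> + \<mu>d - \<gamma> * \<mu>c + \<sigma>d\<^sup>2/2 + (\<gamma> * \<sigma>c)\<^sup>2/2"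
  define S where "S n = (\<Sum>k<n. (Gs \<rho> k)\<^sup>2)" for n
  have r2: "\<rho>\<^sup>2 < 1" using abs_square_less_1[of \<rho>] assms by simp
  have v: "v > 0" using r2 assms unfolding v_def by simp
  have sv: "sqrt v > 0" "(sqrt v)\<^sup>2 = v" using v by auto
  have kpos: "k > 0" using assms unfolding k_def by simp
  have Kpos: "K n > 0" for n unfolding K_def using kpos by (intro prod_pos) simp
  have p0: "p > 0" using assms by simp
  have outer: "(\<integral>x.
            (\<integral>w. (\<Prod>t<n. \<beta> * exp ((\<mu>d + \<phi> * Xpath \<rho> \<sigma> x w t + \<sigma>d * fst (w t))
                                  - \<gamma> * (\<mu>c + Xpath \<rho> \<sigma> x w t + \<sigma>c * fst (snd (w t)))))
               \<partial>shockM n) powr p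
          \<partial>density lborel (normal_density 0 (sqrt (\<sigma>\<^sup>2 / (1 - \<rho>\<^sup>2)))))
       = K n powr p * exp ((p * (q * Gs \<rho> n))\<^sup>2 * v / 2)" for n
  proof -
    have e: "(exp ((\<phi> - \<gamma>) * Gs \<rho> n * x) * K n) powr p = K n powr p * exp ((p * (q * Gs \<rho> n)) * x)" for x
      using Kpos[of n] by (simp add: powr_def q_def ln_mult exp_add[symmetric] distrib_left mult_ac)
    show ?thesis
      unfolding inner e[unfolded K_def k_def] v_def[symmetric] integral_mult_right_zero
      using gauss_mgf(2)[OF sv(1), of "p * (q * Gs \<rho> n)"] sv(2) unfolding K_def k_def
      by (simp add: mult_ac)
  qed
  have lnK: "ln (K n) = real n * L0 + (q * \<sigma>)\<^sup>2 / 2 * S n" for n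
  proof -
    have "ln (K n) = (\<Sum>s<n. ln k + (\<sigma>d\<^sup>2/2 + (- (\<gamma> * \<sigma>c))\<^sup>2/2
            + ((\<phi> - \<gamma>) * \<sigma> * Gs \<rho> (n - Suc s))\<^sup>2/2))"
      unfolding K_def using kpos by (subst ln_prod) (auto simp: ln_mult)
    also have "\<dots> = (\<Sum>s<n. L0 + (q * \<sigma>)\<^sup>2 / 2 * (Gs \<rho> (n - Suc s))\<^sup>2)"
      using assms unfolding L0_def k_def q_def by (intro sum.cong) (simp_all add: ln_mult power_mult_distrib)
    also have "\<dots> = real n * L0 + (q * \<sigma>)\<^sup>2 / 2 * (\<Sum>s<n. (Gs \<rho> (n - Suc s))\<^sup>2)"
      by (simp add: sum.distrib sum_distrib_left)
    also have "(\<Sum>s<n. (Gs \<rho> (n - Suc s))\<^sup>2) = S n"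
      unfolding S_def by (rule sum.nat_diff_reindex)
    finally show ?thesis .
  qed
  have ev: "\<forall>\<^sub>F n in sequentially. L0 + (q * \<sigma>)\<^sup>2 / 2 * (S n / real n) + p * q\<^sup>2 * v / 2 * ((Gs \<rho> n)\<^sup>2 * (1 / real n))
     = 1 / (real n * p) * ln (\<integral>x.
            (\<integral>w. (\<Prod>t<n. \<beta> * exp ((\<mu>d + \<phi> * Xpath \<rho> \<sigma> x w t + \<sigma>d * fst (w t))
                                  - \<gamma> * (\<mu>c + Xpath \<rho> \<sigma> x w t + \<sigma>c * fst (snd (w t)))))
               \<partial>shockM n) powr p
          \<partial>density lborel (normal_density 0 (sqrt (\<sigma>\<^sup>2 / (1 - \<rho>\<^sup>2)))))"
    using eventually_ge_at_top[of "1::nat"]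
  proof eventually_elim
    case (elim n)
    have "ln (K n powr p * exp ((p * (q * Gs \<rho> n))\<^sup>2 * v / 2)) = p * ln (K n) + (p * (q * Gs \<rho> n))\<^sup>2 * v / 2"
      using Kpos[of n] by (simp add: ln_mult ln_powr)
    then show ?case unfolding outer lnK using elim p0
      by (simp add: field_simps power_mult_distrib power2_eq_square)
  qed
  have lim: "(\<lambda>n. L0 + (q * \<sigma>)\<^sup>2 / 2 * (S n / real n) + p * q\<^sup>2 * v / 2 * ((Gs \<rho> n)\<^sup>2 * (1 / real n)))
      \<longlonglongrightarrow> L0 + (q * \<sigma>)\<^sup>2 / 2 * (1 / (1 - \<rho>)\<^sup>2) + p * q\<^sup>2 * v / 2 * 0"
    unfolding S_def by (intro tendsto_intros S_lim A_lim assms)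
  have eqc: "L0 + (q * \<sigma>)\<^sup>2 / 2 * (1 / (1 - \<rho>)\<^sup>2) + p * q\<^sup>2 * v / 2 * 0
     = ln \<beta> + \<mu>d - \<gamma> * \<mu>c + \<sigma>\<^sup>2 / 2 * ((\<phi> - \<gamma>)\<^sup>2 / (1 - \<rho>)\<^sup>2) + (\<sigma>d\<^sup>2 + (\<gamma> * \<sigma>c)\<^sup>2) / 2"
    unfolding L0_def q_def power_mult_distrib by (simp add: field_simps)
  show ?thesis using tendsto_cong[OF ev] lim unfolding eqc by simp
qed


end
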